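(* Let $(G,+)$ be an abelian group with identity $0$. (1) Let $M$ be a (loopless) matroid over $G$. If $M$ is matched to itself, then $0\notin E(M)$. (2) If $G$ satisfies the matroid matching property, then $G$ is either torsion-free or cyclic of prime order.
   Context: A matroid over $G$ is a matroid $M$ whose finite ground set $E(M)$ is a subset of $G$; all matroids are assumed loopless, i.e. every element lies in some independent set. $r(M)$ denotes the rank of $M$. For matroids $M,N$ over $G$ with $r(M)=r(N)=n>0$ and bases $\mathcal{M}=\{a_1,\dots,a_n\}$ of $M$ and $\mathcal{N}=\{b_1,\dots,b_n\}$ of $N$, we say $\mathcal{M}$ is matched to $\mathcal{N}$ if there is a permutation $\pi\in S_n$ with $a_i+b_{\pi(i)}\notin E(M)$ for all $1\le i\le n$. $M$ is matched to $N$ if for every basis $\mathcal{M}$ of $M$ there exists a basis $\mathcal{N}$ of $N$ such that $\mathcal{M}$ is matched to $\mathcal{N}$. The group $G$ has the matroid matching property if for every two matroids $M,N$ over $G$ with $r(M)=r(N)=n>0$, $|E(M)|\le |E(N)|$ and $0\notin E(N)$, $M$ is matched to $N$. *)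

theory Defs
  imports "HOL-Computational_Algebra.Primes"
begin

type_synonym 'a matroid = "'a set \<times> ('a set \<Rightarrow> bool)"

definition ground :: "'a matroid \<Rightarrow> 'a set" where
  "ground M = fst M"

definition indep :: "'a matroid \<Rightarrow> 'a set \<Rightarrow> bool" where
  "indep M = snd M"

definition matroid :: "'a matroid \<Rightarrow> bool" where
  "matroid M \<longleftrightarrow>
     finite (ground M) \<and>
     indep M {} \<and>
     (\<forall>A. indep M A \<longrightarrow> A \<subseteq> ground M) \<and>
     (\<forall>A B. indep M B \<and> A \<subseteq> B \<longrightarrow> indep M A) \<and>
     (\<forall>A B. indep M A \<and> indep M B \<and> card A < card B \<longrightarrow>
        (\<exists>x\<in>B - A. indep M (insert x A)))"

definition loopless :: "'a matroid \<Rightarrow> bool" where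
  "loopless M \<longleftrightarrow> (\<forall>e\<in>ground M. \<exists>A. indep M A \<and> e \<in> A)"

definition basis :: "'a matroid \<Rightarrow> 'a set \<Rightarrow> bool" where
  "basis M B \<longleftrightarrow> indep M B \<and> (\<forall>C. indep M C \<and> B \<subseteq> C \<longrightarrow> C = B)"

definition mrank :: "'a matroid \<Rightarrow> nat" where
  "mrank M = Max (card ` {A. indep M A})"

definition bases_matched :: "'a::ab_group_add matroid \<Rightarrow> 'a set \<Rightarrow> 'a set \<Rightarrow> bool" where
  "bases_matched M A B \<longleftrightarrow>
     (\<exists>\<pi>. bij_betw \<pi> A B \<and> (\<forall>a\<in>A. a + \<pi> a \<notin> ground M))"

definition matched_to :: "'a::ab_group_add matroid \<Rightarrow> 'a matroid \<Rightarrow> bool" where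
  "matched_to M N \<longleftrightarrow>
     (\<forall>A. basis M A \<longrightarrow> (\<exists>B. basis N B \<and> bases_matched M A B))"

definition matroid_matching_property :: "'a::ab_group_add itself \<Rightarrow> bool" where
  "matroid_matching_property _ \<longleftrightarrow>
     (\<forall>(M::'a matroid) (N::'a matroid) n.
        matroid M \<and> loopless M \<and> matroid N \<and> loopless N \<and>
        mrank M = n \<and> mrank N = n \<and> n > 0 \<and>
        card (ground M) \<le> card (ground N) \<and> (0::'a) \<notin> ground N
        \<longrightarrow> matched_to M N)"

definition nsmul :: "nat \<Rightarrow> 'a::ab_group_add \<Rightarrow> 'a" where
  "nsmul n x = ((+) x ^^ n) 0"

definition zsmul :: "int \<Rightarrow> 'a::ab_group_add \<Rightarrow> 'a" where
  "zsmul k x = (if k \<ge> 0 then nsmul (nat k) x else - nsmul (nat (- k)) x)"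

definition torsion_free :: "'a::ab_group_add itself \<Rightarrow> bool" where
  "torsion_free _ \<longleftrightarrow> (\<forall>(x::'a) n. x \<noteq> 0 \<and> n > 0 \<longrightarrow> nsmul n x \<noteq> 0)"

definition cyclic_of_prime_order :: "'a::ab_group_add itself \<Rightarrow> bool" where
  "cyclic_of_prime_order _ \<longleftrightarrow>
     finite (UNIV :: 'a set) \<and> prime (card (UNIV :: 'a set)) \<and>
     (\<exists>g::'a. \<forall>x. \<exists>k. x = zsmul k g)"

end

theory Submission
  imports Defs
begin

lemma nsmul_0[simp]: "nsmul 0 x = 0" by (simp add: nsmul_def)
lemma nsmul_Suc: "nsmul (Suc n) x = x + nsmul n x" by (simp add: nsmul_def)
lemma nsmul_1[simp]: "nsmul 1 x = x" by (simp add: nsmul_def)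
lemma nsmul_add: "nsmul (a + b) x = nsmul a x + nsmul b x"
  by (induction a) (simp_all add: nsmul_Suc add.assoc)
lemma nsmul_mult: "nsmul (a * b) x = nsmul a (nsmul b x)"
  by (induction a) (simp_all add: nsmul_Suc nsmul_add add.commute)
lemma nsmul_zero[simp]: "nsmul k 0 = (0::'a::ab_group_add)"
  by (induction k) (simp_all add: nsmul_Suc)
lemma nsmul_mod: assumes "nsmul n x = 0" shows "nsmul k x = nsmul (k mod n) x"
proof -
  have "k = n * (k div n) + k mod n" by simp
  then have "nsmul k x = nsmul (n * (k div n)) x + nsmul (k mod n) x"
    by (metis nsmul_add)
  also have "nsmul (n * (k div n)) x = 0"
    by (simp add: mult.commute[of n] nsmul_mult assms)
  finally show ?thesis by simp
qed

definition freem :: "'a set \<Rightarrow> 'a matroid" where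
  "freem S = (S, \<lambda>A. A \<subseteq> S)"

lemma freem_ground[simp]: "ground (freem S) = S" by (simp add: freem_def ground_def)
lemma freem_indep[simp]: "indep (freem S) A = (A \<subseteq> S)" by (simp add: freem_def indep_def)

lemma freem_matroid: "finite S \<Longrightarrow> matroid (freem S)"
  unfolding matroid_def freem_ground freem_indep
proof (intro conjI allI impI)
  assume "finite S" then show "finite S" .
next
  show "{} \<subseteq> S" by simp
next
  fix A assume "A \<subseteq> S" then show "A \<subseteq> S" .
next
  fix A B assume "B \<subseteq> S \<and> A \<subseteq> B" then show "A \<subseteq> S" by blast
next
  fix A B assume h: "A \<subseteq> S \<and> B \<subseteq> S \<and> card A < card B" "finite S"
  have "\<not> B \<subseteq> A"
  proof
    assume "B \<subseteq> A"
    then have "card B \<le> card A" using h by (meson card_mono finite_subset)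
    then show False using h by simp
  qed
  then obtain z where "z \<in> B - A" by blast
  then show "\<exists>x\<in>B - A. insert x A \<subseteq> S" using h by blast
qed

lemma freem_loopless: "loopless (freem S)"
  unfolding loopless_def by auto

lemma freem_mrank: "finite S \<Longrightarrow> mrank (freem S) = card S"
proof -
  assume f: "finite S"
  have e: "Collect (indep (freem S)) = Pow S" by auto
  show ?thesis unfolding mrank_def e
    by (rule Max_eqI) (use f in \<open>auto intro: card_mono\<close>)
qed

lemma freem_basis: "basis (freem S) B \<longleftrightarrow> B = S"
  unfolding basis_def by auto

lemma part1:
  fixes M :: "('a::ab_group_add) matroid"
  assumes m: "matroid M" and l: "loopless M" and mm: "matched_to M M"
  shows "0 \<notin> ground M"
proof
  assume z: "0 \<in> ground M"
  from m have fin: "finite (ground M)" and sub: "\<And>A. indep M A \<Longrightarrow> A \<subseteq> ground M"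
    and down: "\<And>A B. indep M B \<Longrightarrow> A \<subseteq> B \<Longrightarrow> indep M A"
    unfolding matroid_def by blast+
  from l z obtain A0 where "indep M A0" "0 \<in> A0" unfolding loopless_def by blast
  then have i0: "indep M {0}" using down by blast
  define F where "F = {A. indep M A \<and> 0 \<in> A}"
  have Fsub: "F \<subseteq> Pow (ground M)" using sub F_def by blast
  have finF: "finite F" using Fsub fin by (meson finite_Pow_iff finite_subset)
  have neF: "{0} \<in> F" using i0 F_def by simp
  define k where "k = Max (card ` F)"
  have "k \<in> card ` F" unfolding k_def using finF neF by (intro Max_in) auto
  then obtain B where B: "B \<in> F" "card B = k" by blast
  have maxc: "\<And>C. C \<in> F \<Longrightarrow> card C \<le> k" unfolding k_def using finF by simp
  have bas: "basis M B"
    unfolding basis_def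
  proof (intro conjI allI impI)
    show "indep M B" using B F_def by simp
    fix C assume c: "indep M C \<and> B \<subseteq> C"
    then have "C \<in> F" using B F_def by auto
    then have "card C \<le> card B" using maxc B by simp
    moreover have "finite C" using c sub fin finite_subset by blast
    ultimately show "C = B" using c by (metis card_subset_eq antisym card_mono)
  qed
  from mm bas obtain B' where "basis M B'" "bases_matched M B B'"
    unfolding matched_to_def by blast
  then obtain \<pi> where p: "bij_betw \<pi> B B'" "\<forall>a\<in>B. a + \<pi> a \<notin> ground M"
    unfolding bases_matched_def by blast
  have "0 \<in> B" using B F_def by simp
  then have "\<pi> 0 \<in> B'" using p bij_betwE by blast
  moreover have "B' \<subseteq> ground M" using \<open>basis M B'\<close> sub basis_def by blast
  ultimately show False using p \<open>0 \<in> B\<close> by (metis add_0 subsetD)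
qed

lemma part2:
  assumes mmp: "matroid_matching_property TYPE('a::ab_group_add)"
    and ntf: "\<not> torsion_free TYPE('a)"
  shows "cyclic_of_prime_order TYPE('a)"
proof -
  define P where "P = (\<lambda>n. n > 0 \<and> (\<exists>x::'a. x \<noteq> 0 \<and> nsmul n x = 0))"
  from ntf have ex: "\<exists>n. P n" unfolding torsion_free_def P_def by blast
  define n where "n = (LEAST n. P n)"
  have Pn: "P n" unfolding n_def using ex by (metis LeastI)
  have minP: "\<And>m (z::'a). 0 < m \<Longrightarrow> m < n \<Longrightarrow> z \<noteq> 0 \<Longrightarrow> nsmul m z \<noteq> 0"
    using not_less_Least[of _ P] P_def n_def by blast
  from Pn obtain x :: 'a where x: "x \<noteq> 0" "nsmul n x = 0" and n0: "n > 0" unfolding P_def by blast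
  have n1: "n \<noteq> 1" using x by (auto simp: nsmul_Suc)
  have pr: "prime n"
    unfolding prime_nat_iff
  proof (intro conjI allI impI)
    show "1 < n" using n0 n1 by simp
    fix m assume "m dvd n"
    then obtain k where k: "n = m * k" by blast
    show "m = 1 \<or> m = n"
    proof (rule ccontr)
      assume "\<not> (m = 1 \<or> m = n)"
      then have hm: "m \<noteq> 1" "m \<noteq> n" by auto
      have m0: "m > 0" using k n0 by (cases m) auto
      have k0: "k > 0" using k n0 by (cases k) auto
      have k1: "k \<noteq> 1" using hm k by simp
      have "m \<le> m * k" using k0 by simp
      then have mn: "m < n" using k hm by simp
      have "k \<le> m * k" using m0 by simp
      moreover have "k \<noteq> n"
      proof
        assume "k = n"
        then have "m * n = 1 * n" using k by (metis mult_1)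
        then show False using n0 hm by simp
      qed
      ultimately have kn: "k < n" using k by simp
      have "nsmul m x \<noteq> 0" using minP m0 mn x by blast
      moreover have "nsmul k (nsmul m x) = 0" using x k by (simp add: nsmul_mult[symmetric] mult.commute)
      ultimately show False using minP k0 kn by blast
    qed
  qed
  define H where "H = range (\<lambda>k. nsmul k x)"
  have Himg: "H = (\<lambda>k. nsmul k x) ` {..<n}"
  proof
    show "(\<lambda>k. nsmul k x) ` {..<n} \<subseteq> H" unfolding H_def by auto
    show "H \<subseteq> (\<lambda>k. nsmul k x) ` {..<n}"
    proof
      fix z assume "z \<in> H"
      then obtain k where "z = nsmul k x" unfolding H_def by blast
      then have "z = nsmul (k mod n) x" using nsmul_mod[OF x(2)] by simp
      moreover have "k mod n \<in> {..<n}" using n0 by simp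
      ultimately show "z \<in> (\<lambda>k. nsmul k x) ` {..<n}" by blast
    qed
  qed
  have inj: "inj_on (\<lambda>k. nsmul k x) {..<n}"
  proof (rule inj_onI)
    fix i j assume ij: "i \<in> {..<n}" "j \<in> {..<n}" "nsmul i x = nsmul j x"
    show "i = j"
    proof (rule ccontr)
      assume "i \<noteq> j"
      then consider "i < j" | "j < i" by linarith
      then show False
      proof cases
        case 1
        then have "nsmul j x = nsmul (j - i) x + nsmul i x" by (simp add: nsmul_add[symmetric])
        then have "nsmul (j - i) x = 0" using ij by simp
        then show ?thesis using minP[of "j - i" x] 1 ij x by (simp add: less_imp_diff_less)
      next
        case 2
        then have "nsmul i x = nsmul (i - j) x + nsmul j x" by (simp add: nsmul_add[symmetric])
        then have "nsmul (i - j) x = 0" using ij by simp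
        then show ?thesis using minP[of "i - j" x] 2 ij x by (simp add: less_imp_diff_less)
      qed
    qed
  qed
  have finH: "finite H" using Himg by simp
  have cardH: "card H = n" using Himg inj by (simp add: card_image)
  have closed: "\<And>a b. a \<in> H \<Longrightarrow> b \<in> H \<Longrightarrow> a + b \<in> H"
    unfolding H_def by (auto simp: nsmul_add[symmetric])
  have zH: "0 \<in> H" unfolding H_def by (metis nsmul_0 rangeI)
  have xH: "x \<in> H" unfolding H_def by (metis nsmul_1 rangeI)
  show ?thesis
  proof (cases "H = UNIV")
    case True
    show ?thesis unfolding cyclic_of_prime_order_def
    proof (intro conjI)
      show "finite (UNIV::'a set)" using True finH by simp
      show "prime (card (UNIV::'a set))" using True cardH pr by simp
      show "\<exists>g::'a. \<forall>y. \<exists>k. y = zsmul k g"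
      proof (intro exI[of _ x] allI)
        fix y :: 'a
        from True obtain k where "y = nsmul k x" unfolding H_def by (metis UNIV_I imageE)
        then have "y = zsmul (int k) x" by (simp add: zsmul_def)
        then show "\<exists>k. y = zsmul k x" by blast
      qed
    qed
  next
    case False
    then obtain y where y: "y \<notin> H" by blast
    define T where "T = insert y (H - {0})"
    have finT: "finite T" using finH T_def by simp
    have cardT: "card T = card H" unfolding T_def using y finH zH
      by (simp add: card_Diff_singleton, metis card_0_eq Suc_pred neq0_conv empty_iff finH zH)
    have y0: "y \<noteq> 0" using y zH by blast
    have c: "matroid (freem H) \<and> loopless (freem H) \<and> matroid (freem T) \<and> loopless (freem T) \<and>
        mrank (freem H) = card H \<and> mrank (freem T) = card H \<and> card H > 0 \<and>
        card (ground (freem H)) \<le> card (ground (freem T)) \<and> (0::'a) \<notin> ground (freem T)"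
      using freem_matroid[OF finH] freem_matroid[OF finT] freem_loopless[of H] freem_loopless[of T]
        freem_mrank[OF finH] freem_mrank[OF finT] cardT cardH n0 y0 T_def by simp
    have "matched_to (freem H) (freem T)"
      using mmp c unfolding matroid_matching_property_def by blast
    then obtain \<pi> where p: "bij_betw \<pi> H T" "\<forall>a\<in>H. a + \<pi> a \<notin> H"
      unfolding matched_to_def freem_basis bases_matched_def by auto
    have "\<exists>a\<in>H. \<pi> a \<noteq> y"
    proof (rule ccontr)
      assume "\<not> ?thesis"
      then have "\<pi> 0 = \<pi> x" using zH xH by auto
      then show False using p(1) zH xH x unfolding bij_betw_def inj_on_def by metis
    qed
    then obtain a where a: "a \<in> H" "\<pi> a \<noteq> y" by blast
    then have "\<pi> a \<in> H" using p(1) T_def bij_betwE by fastforce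
    then show ?thesis using closed a p(2) by blast
  qed
qed

theorem proposition1p8:
  shows "(\<forall>M::('a::ab_group_add) matroid.
            matroid M \<and> loopless M \<and> matched_to M M \<longrightarrow> 0 \<notin> ground M)
       \<and> (matroid_matching_property TYPE('a) \<longrightarrow>
            torsion_free TYPE('a) \<or> cyclic_of_prime_order TYPE('a))"
  using part1 part2 by blast

end
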